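(* Let $\mathit{VI}$ be a finite set of variables with $\#\mathit{VI}=n$ and $1\le k\le n$. For each $sh_1,sh_2\in\mathit{SH}$ and each $V\subseteq\mathit{VI}$: if $\rho_{\mathit{TSD}_k}(sh_1)=\rho_{\mathit{TSD}_k}(sh_2)$ then $\rho_{\mathit{TSD}_k}(\mathrm{proj}(sh_1,V))=\rho_{\mathit{TSD}_k}(\mathrm{proj}(sh_2,V))$.
   Context: $\mathit{SG}=\wp(\mathit{VI})\setminus\{\emptyset\}$, $\mathit{SH}=\wp(\mathit{SG})$. $\rho_{\mathit{TSD}_k}(sh)=\{\,S\in\mathit{SG}\mid \forall T\subseteq S:\ \#T<k\implies S=\bigcup\{U\in sh\mid T\subseteq U\subseteq S\}\,\}$. $\mathrm{proj}(sh,V)=\{S\cap V\mid S\in sh, S\cap V\ne\emptyset\}\cup\{\{x\}\mid x\in\mathit{VI}\setminus V\}$. *)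

theory Defs
  imports Main
begin

definition SG :: "'a set \<Rightarrow> 'a set set" where
  "SG VI = Pow VI - {{}}"

definition SH :: "'a set \<Rightarrow> 'a set set set" where
  "SH VI = Pow (SG VI)"

definition rho_TSD :: "'a set \<Rightarrow> nat \<Rightarrow> 'a set set \<Rightarrow> 'a set set" where
  "rho_TSD VI k sh = {S \<in> SG VI. \<forall>T. T \<subseteq> S \<longrightarrow> card T < k \<longrightarrow>
      S = \<Union>{U \<in> sh. T \<subseteq> U \<and> U \<subseteq> S}}"

definition proj :: "'a set \<Rightarrow> 'a set set \<Rightarrow> 'a set \<Rightarrow> 'a set set" where
  "proj VI sh V = {S \<inter> V | S. S \<in> sh \<and> S \<inter> V \<noteq> {}} \<union> {{x} | x. x \<in> VI - V}"

end

theory Submission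
  imports Defs
begin

lemma rhoI:
  assumes "S \<in> SG VI"
    and "\<And>T x. T \<subseteq> S \<Longrightarrow> card T < k \<Longrightarrow> x \<in> S \<Longrightarrow> \<exists>U\<in>A. T \<subseteq> U \<and> U \<subseteq> S \<and> x \<in> U"
  shows "S \<in> rho_TSD VI k A"
proof -
  have "\<forall>T. T \<subseteq> S \<longrightarrow> card T < k \<longrightarrow> S = \<Union>{U \<in> A. T \<subseteq> U \<and> U \<subseteq> S}"
  proof (intro allI impI)
    fix T assume T: "T \<subseteq> S" "card T < k"
    show "S = \<Union>{U \<in> A. T \<subseteq> U \<and> U \<subseteq> S}"
    proof (rule subset_antisym)
      show "S \<subseteq> \<Union>{U \<in> A. T \<subseteq> U \<and> U \<subseteq> S}"
      proof
        fix x assume "x \<in> S"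
        then obtain U where "U\<in>A" "T \<subseteq> U" "U \<subseteq> S" "x \<in> U" using assms(2) T by blast
        then show "x \<in> \<Union>{U \<in> A. T \<subseteq> U \<and> U \<subseteq> S}" by blast
      qed
    qed blast
  qed
  then show ?thesis using assms(1) unfolding rho_TSD_def by simp
qed

lemma rho_SG: "S \<in> rho_TSD VI k A \<Longrightarrow> S \<in> SG VI"
  unfolding rho_TSD_def by simp

lemma rhoD:
  assumes "S \<in> rho_TSD VI k A" "T \<subseteq> S" "card T < k" "x \<in> S"
  shows "\<exists>U\<in>A. T \<subseteq> U \<and> U \<subseteq> S \<and> x \<in> U"
proof -
  have "S = \<Union>{U \<in> A. T \<subseteq> U \<and> U \<subseteq> S}" using assms(1-3) unfolding rho_TSD_def by simp
  then have "x \<in> \<Union>{U \<in> A. T \<subseteq> U \<and> U \<subseteq> S}" using assms(4) by simp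
  then show ?thesis by blast
qed

lemma rho_mono: "A \<subseteq> B \<Longrightarrow> rho_TSD VI k A \<subseteq> rho_TSD VI k B"
proof
  fix S assume AB: "A \<subseteq> B" and S: "S \<in> rho_TSD VI k A"
  show "S \<in> rho_TSD VI k B"
  proof (rule rhoI)
    show "S \<in> SG VI" using S by (rule rho_SG)
    fix T x assume "T \<subseteq> S" "card T < k" "x \<in> S"
    then obtain U where "U\<in>A" "T \<subseteq> U" "U \<subseteq> S" "x \<in> U" using rhoD[OF S] by blast
    then show "\<exists>U\<in>B. T \<subseteq> U \<and> U \<subseteq> S \<and> x \<in> U" using AB by blast
  qed
qed

lemma rho_ext: "A \<subseteq> SG VI \<Longrightarrow> A \<subseteq> rho_TSD VI k A"
proof
  fix S assume A: "A \<subseteq> SG VI" and S: "S \<in> A"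
  show "S \<in> rho_TSD VI k A"
  proof (rule rhoI)
    show "S \<in> SG VI" using A S by blast
    fix T x assume "T \<subseteq> S" "card T < k" "x \<in> S"
    then show "\<exists>U\<in>A. T \<subseteq> U \<and> U \<subseteq> S \<and> x \<in> U" using S by blast
  qed
qed

lemma rho_idem: "rho_TSD VI k (rho_TSD VI k A) \<subseteq> rho_TSD VI k A"
proof
  fix S assume S: "S \<in> rho_TSD VI k (rho_TSD VI k A)"
  show "S \<in> rho_TSD VI k A"
  proof (rule rhoI)
    show "S \<in> SG VI" using S by (rule rho_SG)
    fix T x assume T: "T \<subseteq> S" "card T < k" "x \<in> S"
    then obtain U where U: "U \<in> rho_TSD VI k A" "T \<subseteq> U" "U \<subseteq> S" "x \<in> U"
      using rhoD[OF S] by blast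
    then obtain W where "W \<in> A" "T \<subseteq> W" "W \<subseteq> U" "x \<in> W" using rhoD[OF U(1)] T(2) by blast
    then show "\<exists>U\<in>A. T \<subseteq> U \<and> U \<subseteq> S \<and> x \<in> U" using U(3) by blast
  qed
qed

lemma proj_mono: "A \<subseteq> B \<Longrightarrow> proj VI A V \<subseteq> proj VI B V"
  unfolding proj_def by blast

lemma proj_SG: "A \<subseteq> SG VI \<Longrightarrow> V \<subseteq> VI \<Longrightarrow> proj VI A V \<subseteq> SG VI"
  unfolding proj_def SG_def by blast

lemma key: assumes "A \<subseteq> SG VI" "V \<subseteq> VI"
  shows "proj VI (rho_TSD VI k A) V \<subseteq> rho_TSD VI k (proj VI A V)"
proof
  fix X assume X: "X \<in> proj VI (rho_TSD VI k A) V"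
  show "X \<in> rho_TSD VI k (proj VI A V)"
  proof (cases "\<exists>x. x \<in> VI - V \<and> X = {x}")
    case True
    then have "X \<in> proj VI A V" unfolding proj_def by blast
    then show ?thesis using rho_ext[of "proj VI A V" VI k] proj_SG[OF assms] by blast
  next
    case False
    then obtain S where S: "S \<in> rho_TSD VI k A" "X = S \<inter> V" "S \<inter> V \<noteq> {}"
      using X unfolding proj_def by blast
    show ?thesis
    proof (rule rhoI)
      have "S \<in> SG VI" using S(1) by (rule rho_SG)
      then show "X \<in> SG VI" using S(2,3) assms unfolding SG_def by blast
      fix T x assume T: "T \<subseteq> X" "card T < k" "x \<in> X"
      then obtain W where W: "W \<in> A" "T \<subseteq> W" "W \<subseteq> S" "x \<in> W"
        using rhoD[OF S(1), of T x] S(2) by blast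
      have "W \<inter> V \<in> proj VI A V" using W T(3) S(2) unfolding proj_def by blast
      moreover have "T \<subseteq> W \<inter> V" using T S(2) W by blast
      moreover have "W \<inter> V \<subseteq> X" using W S(2) by blast
      ultimately show "\<exists>U\<in>proj VI A V. T \<subseteq> U \<and> U \<subseteq> X \<and> x \<in> U"
        using W T(3) S(2) by blast
    qed
  qed
qed

lemma rho_proj: assumes "A \<subseteq> SG VI" "V \<subseteq> VI"
  shows "rho_TSD VI k (proj VI A V) = rho_TSD VI k (proj VI (rho_TSD VI k A) V)"
proof
  show "rho_TSD VI k (proj VI A V) \<subseteq> rho_TSD VI k (proj VI (rho_TSD VI k A) V)"
    by (intro rho_mono proj_mono rho_ext assms)
next
  have "rho_TSD VI k (proj VI (rho_TSD VI k A) V) \<subseteq> rho_TSD VI k (rho_TSD VI k (proj VI A V))"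
    by (intro rho_mono key assms)
  then show "rho_TSD VI k (proj VI (rho_TSD VI k A) V) \<subseteq> rho_TSD VI k (proj VI A V)"
    using rho_idem by blast
qed

theorem lemma3p22:
  fixes VI :: "'a set" and n k :: nat and sh1 sh2 :: "'a set set" and V :: "'a set"
  assumes "finite VI" and "card VI = n" and "1 \<le> k" and "k \<le> n"
    and "sh1 \<in> SH VI" and "sh2 \<in> SH VI" and "V \<subseteq> VI"
    and "rho_TSD VI k sh1 = rho_TSD VI k sh2"
  shows "rho_TSD VI k (proj VI sh1 V) = rho_TSD VI k (proj VI sh2 V)"
proof -
  have h: "sh1 \<subseteq> SG VI" "sh2 \<subseteq> SG VI" using assms(5,6) unfolding SH_def by auto
  have "rho_TSD VI k (proj VI sh1 V) = rho_TSD VI k (proj VI (rho_TSD VI k sh1) V)"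
    by (rule rho_proj[OF h(1) assms(7)])
  also have "\<dots> = rho_TSD VI k (proj VI (rho_TSD VI k sh2) V)" using assms(8) by simp
  also have "\<dots> = rho_TSD VI k (proj VI sh2 V)"
    by (rule rho_proj[OF h(2) assms(7), symmetric])
  finally show ?thesis .
qed

end
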